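(* Let $Q=[0,1]^3$ and for a finite set $Y\subseteq Q$ let $E(Y)=\int_Q\operatorname{dist}^2(x,Y)\,dx$. Given $n$, let $Y_n$ be a minimizer of $E$ among all sets of $n$ points in $Q$. Let $y\in Y_n$, let $V=\{x\in Q:|x-y|\le|x-z|\ \forall z\in Y_n\}$ be its Voronoi cell, and let $r:=\max_{z'\in\partial V}|z'-y|$. Then \[\min_{z\in Y_n\setminus\{y\}}|y-z|\ \ge\ r\Big(\sqrt{1+\tfrac{2^4\cdot 3^3}{5^2\cdot 10^3}}-1\Big)\ \ge\ \Gamma_2|V|^{1/3},\] where $\Gamma_2:=\Big(\sqrt{1+\tfrac{2^4\cdot 3^3}{5^2\cdot 10^3}}-1\Big)\omega_3^{-1/3}$ and $\omega_3=4\pi/3$. *)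

theory Defs
  imports "HOL-Analysis.Analysis"
begin

definition unit_cube :: "(real^3) set" where
  "unit_cube = {x. \<forall>i. 0 \<le> x$i \<and> x$i \<le> 1}"

definition energy :: "(real^3) set \<Rightarrow> real" where
  "energy Y = integral unit_cube (\<lambda>x. (infdist x Y)^2)"

definition voronoi_cell :: "(real^3) set \<Rightarrow> real^3 \<Rightarrow> (real^3) set" where
  "voronoi_cell Y y = {x \<in> unit_cube. \<forall>z\<in>Y. dist x y \<le> dist x z}"

definition Gamma2 :: real where
  "Gamma2 = (sqrt (1 + (2^4 * 3^3) / (5^2 * 10^3)) - 1) * (4 * pi / 3) powr (-1/3)"

end

theory Submission
  imports Defs
begin


lemma cube_cbox: "unit_cube = cbox 0 (1::real^3)"
  by (auto simp: unit_cube_def mem_box_cart)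

lemma cont_int:
  fixes f :: "real^3 \<Rightarrow> 'b::euclidean_space"
  assumes "compact S" "continuous_on S f"
  shows "f integrable_on S"
  using borel_integrable_compact[OF assms] set_borel_integral_eq_integral(1)[of S f]
  unfolding set_integrable_def by simp

lemma homothety_measure:
  fixes S :: "(real^3) set" and t :: real
  assumes "t \<ge> 0"
  shows "measure lebesgue ((\<lambda>x. p + t *\<^sub>R (x - p)) ` S) = t^3 * measure lebesgue S"
proof -
  have e: "(\<lambda>x. p + t *\<^sub>R (x - p)) = (\<lambda>x. t *\<^sub>R x + (p - t *\<^sub>R p))"
    by (auto simp: algebra_simps)
  moreover have "DIM(real^3) = 3" by simp
  ultimately show ?thesis using measure_lebesgue_affine[of t "p - t *\<^sub>R p" S] assms by (simp only: e)
qed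

lemma vor_eq: "voronoi_cell Y y = unit_cube \<inter> (\<Inter>z\<in>Y. {x. inner (2 *\<^sub>R (z - y)) x \<le> inner z z - inner y y})"
proof -
  have "dist x y \<le> dist x z \<longleftrightarrow> inner (2 *\<^sub>R (z - y)) x \<le> inner z z - inner y y" for x z :: "real^3"
  proof -
    have "dist x y \<le> dist x z \<longleftrightarrow> (dist x y)^2 \<le> (dist x z)^2" by simp
    also have "\<dots> \<longleftrightarrow> inner (x - y) (x - y) \<le> inner (x - z) (x - z)"
      by (simp add: dist_norm power2_norm_eq_inner)
    also have "\<dots> \<longleftrightarrow> inner (2 *\<^sub>R (z - y)) x \<le> inner z z - inner y y"
      by (simp add: inner_diff_left inner_diff_right inner_commute algebra_simps)
    finally show ?thesis .
  qed
  then show ?thesis by (auto simp: voronoi_cell_def)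
qed

lemma vor_convex: "convex (voronoi_cell Y y)"
  unfolding vor_eq cube_cbox
  by (intro convex_Int convex_box convex_INT ballI convex_halfspace_le)

lemma vor_closed: "closed (voronoi_cell Y y)"
  unfolding vor_eq cube_cbox
  by (intro closed_Int closed_cbox closed_INT ballI closed_halfspace_le)

lemma vor_compact: "compact (voronoi_cell Y y)"
proof -
  have "voronoi_cell Y y \<subseteq> cbox 0 1" by (auto simp: voronoi_cell_def cube_cbox)
  then show ?thesis using vor_closed compact_cbox
    by (meson bounded_cbox bounded_subset compact_eq_bounded_closed)
qed



lemma infdist_vor:
  assumes "y \<in> Y" "x \<in> voronoi_cell Y y"
  shows "infdist x Y = dist x y"
proof (rule antisym)
  show "infdist x Y \<le> dist x y" by (rule infdist_le[OF assms(1)])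
  have "Y \<noteq> {}" using assms by auto
  then show "dist x y \<le> infdist x Y"
    using assms(2) unfolding infdist_def voronoi_cell_def by (auto intro!: cINF_greatest)
qed

lemma infdist_off:
  assumes "y \<in> Y" "x \<in> unit_cube" "x \<notin> voronoi_cell Y y"
  shows "infdist x (insert q (Y - {y})) \<le> infdist x Y"
proof -
  obtain z where z: "z \<in> Y" "dist x z < dist x y"
    using assms unfolding voronoi_cell_def by force
  have zy: "z \<noteq> y" using z by auto
  have "Y \<noteq> {}" using assms by auto
  moreover have "infdist x (insert q (Y - {y})) \<le> dist x a" if "a \<in> Y" for a
  proof (cases "a = y")
    case True
    have "infdist x (insert q (Y - {y})) \<le> dist x z" using z zy by (intro infdist_le) auto
    then show ?thesis using z True by simp
  next
    case False
    then show ?thesis using that by (intro infdist_le) auto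
  qed
  ultimately show ?thesis unfolding infdist_def[of x Y] by (auto intro!: cINF_greatest)
qed

lemma energy_repl:
  assumes "y \<in> Y"
    and g: "g integrable_on (voronoi_cell Y y)"
    and le: "\<And>x. x \<in> voronoi_cell Y y \<Longrightarrow> (infdist x (insert q (Y - {y})))^2 \<le> g x"
  shows "energy (insert q (Y - {y})) \<le> energy Y + integral (voronoi_cell Y y) g
            - integral (voronoi_cell Y y) (\<lambda>x. (dist x y)^2)"
proof -
  define V where "V = voronoi_cell Y y"
  define Y' where "Y' = insert q (Y - {y})"
  define f where "f x = (infdist x Y)^2" for x
  define f' where "f' x = (infdist x Y')^2" for x
  define k where "k x = g x - (dist x y)^2" for x
  have VQ: "V \<subseteq> unit_cube" by (auto simp: V_def voronoi_cell_def)
  have cf: "continuous_on unit_cube f" unfolding f_def by (intro continuous_intros)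
  have cf': "continuous_on unit_cube f'" unfolding f'_def by (intro continuous_intros)
  have if_: "f integrable_on unit_cube" using cf by (simp add: cube_cbox integrable_continuous)
  have if': "f' integrable_on unit_cube" using cf' by (simp add: cube_cbox integrable_continuous)
  have d2: "(\<lambda>x. (dist x y)^2) integrable_on V"
    by (rule cont_int) (auto simp: V_def vor_compact intro!: continuous_intros)
  have ik: "k integrable_on V" unfolding k_def using g d2 V_def by (intro integrable_diff) auto
  have ik': "(\<lambda>x. if x \<in> V then k x else 0) integrable_on unit_cube"
    using ik VQ by (simp add: integrable_restrict_Int Int_absorb2)
  have ik'': "integral unit_cube (\<lambda>x. if x \<in> V then k x else 0) = integral V k"
    using VQ by (simp add: Henstock_Kurzweil_Integration.integral_restrict_Int Int_absorb2)
  have "energy Y' = integral unit_cube f'" unfolding energy_def f'_def by simp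
  also have "\<dots> \<le> integral unit_cube (\<lambda>x. f x + (if x \<in> V then k x else 0))"
  proof (rule integral_le[OF if' integrable_add[OF if_ ik']])
    fix x assume x: "x \<in> unit_cube"
    show "f' x \<le> f x + (if x \<in> V then k x else 0)"
    proof (cases "x \<in> V")
      case True
      then show ?thesis using le[of x] infdist_vor[OF assms(1), of x]
        by (simp add: f_def f'_def k_def V_def Y'_def)
    next
      case False
      then have "infdist x Y' \<le> infdist x Y" using infdist_off[OF assms(1) x] by (simp add: V_def Y'_def)
      then have "f' x \<le> f x" unfolding f_def f'_def using infdist_nonneg
        by (intro power_mono) (auto intro: infdist_nonneg)
      then show ?thesis using False by simp
    qed
  qed
  also have "\<dots> = energy Y + integral V k"
    using integral_add[OF if_ ik'] ik'' unfolding energy_def f_def by simp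
  also have "integral V k = integral V g - integral V (\<lambda>x. (dist x y)^2)"
    unfolding k_def using g d2 V_def by (simp add: integral_diff)
  finally show ?thesis by (simp add: V_def Y'_def)
qed



lemma cp_dist:
  assumes "x \<in> unit_cube"
  shows "dist x (closest_point unit_cube q) \<le> dist x q"
proof -
  define P where "P = closest_point unit_cube q"
  have "inner (q - P) (x - P) \<le> 0" unfolding P_def
    using assms by (intro closest_point_dot) (auto simp: cube_cbox convex_box)
  then have "(norm (x - P))^2 \<le> (norm (x - q))^2"
  proof -
    have "x - q = (x - P) - (q - P)" by simp
    then have "(norm (x - q))^2 = (norm (x - P))^2 - 2 * inner (q - P) (x - P) + (norm (q - P))^2"
      by (simp add: power2_norm_eq_inner inner_diff_left inner_diff_right inner_commute algebra_simps)
    then show ?thesis using \<open>inner (q - P) (x - P) \<le> 0\<close> by (smt (verit) zero_le_power2)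
  qed
  then show ?thesis by (simp add: P_def dist_norm power2_le_iff_abs_le)
qed

lemma centroid:
  assumes Ysub: "Y \<subseteq> unit_cube" and fin: "finite Y" and cardY: "card Y = n"
    and opt: "\<And>Y'. Y' \<subseteq> unit_cube \<Longrightarrow> finite Y' \<Longrightarrow> card Y' = n \<Longrightarrow> energy Y \<le> energy Y'"
    and yY: "y \<in> Y" and d0: "d0 > 0" "\<And>w. w \<in> Y - {y} \<Longrightarrow> d0 \<le> dist y w"
  shows "integral (voronoi_cell Y y) (\<lambda>x. x - y) = 0"
proof (rule ccontr)
  define V where "V = voronoi_cell Y y"
  define m where "m = integral V (\<lambda>x. x - y)"
  assume "integral (voronoi_cell Y y) (\<lambda>x. x - y) \<noteq> 0"
  then have m0: "m \<noteq> 0" by (simp add: m_def V_def)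
  define Vm where "Vm = integral V (\<lambda>x. 1::real)"
  have VQ: "V \<subseteq> unit_cube" by (auto simp: V_def voronoi_cell_def)
  have int1: "(\<lambda>x. x - y) integrable_on V"
    by (rule cont_int) (auto simp: V_def vor_compact intro!: continuous_intros)
  have int2: "(\<lambda>x. (dist x y)^2) integrable_on V"
    by (rule cont_int) (auto simp: V_def vor_compact intro!: continuous_intros)
  have int3: "(\<lambda>x. inner (x - y) m) integrable_on V"
    by (rule cont_int) (auto simp: V_def vor_compact intro!: continuous_intros)
  have int4: "(\<lambda>x. 1::real) integrable_on V"
    using cont_int[of V "\<lambda>x. 1::real"] by (simp add: V_def vor_compact)
  have Vm0: "Vm \<ge> 0" unfolding Vm_def using int4 by (intro integral_nonneg) auto
  have i3: "integral V (\<lambda>x. inner (x - y) m) = inner m m"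
    using integral_component_eq[OF int1, of m] by (simp add: m_def)
  define s where "s = min (1 / (Vm + 1)) (d0 / (2 * (norm m + 1)))"
  have s0: "s > 0"
  proof -
    have a: "1 / (Vm + 1) > 0" using Vm0 by simp
    have "2 * (norm m + 1) > 0" by (simp add: add_nonneg_pos)
    then have b: "d0 / (2 * (norm m + 1)) > 0" using d0(1) by simp
    show ?thesis using a b by (simp add: s_def)
  qed
  have sV: "s * Vm < 1"
  proof -
    have "s \<le> 1 / (Vm + 1)" by (simp add: s_def)
    then have "s * Vm \<le> 1 / (Vm + 1) * Vm" using Vm0 by (rule mult_right_mono)
    also have "\<dots> < 1" using Vm0 by (simp add: field_simps)
    finally show ?thesis .
  qed
  have sm: "s * norm m < d0"
  proof -
    have lt: "norm m / (2 * (norm m + 1)) < 1"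
    proof -
      have p: "0 < 2 * (norm m + 1)" by (simp add: add_nonneg_pos)
      have "norm m < 2 * (norm m + 1)" by (simp add: algebra_simps add_nonneg_pos)
      then show ?thesis using p by (simp only: divide_less_eq_1_pos)
    qed
    have "s * norm m \<le> d0 / (2 * (norm m + 1)) * norm m" using s0
      by (intro mult_right_mono) (auto simp: s_def)
    also have "\<dots> = d0 * (norm m / (2 * (norm m + 1)))" by simp
    also have "\<dots> < d0 * 1" using d0(1) lt by (rule mult_strict_left_mono[rotated])
    finally show ?thesis by simp
  qed
  define q where "q = y + s *\<^sub>R m"
  define y' where "y' = closest_point unit_cube q"
  have y'Q: "y' \<in> unit_cube" unfolding y'_def cube_cbox
    by (rule closest_point_in_set) (use mem_box_cart(2)[of 0 0 1] in auto)
  have "dist y y' \<le> dist y q" unfolding y'_def using cp_dist Ysub yY by auto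
  also have "dist y q = s * norm m" using s0 by (simp add: q_def dist_norm)
  finally have dyy': "dist y y' < d0" using sm by simp
  have y'nY: "y' \<notin> Y - {y}" using d0(2) dyy' by force
  define Y'' where "Y'' = insert y' (Y - {y})"
  have "card Y'' = n" unfolding Y''_def using y'nY fin yY cardY
    by (simp add: card_insert_if) (metis One_nat_def Suc_pred card_gt_0_iff empty_iff)
  moreover have "Y'' \<subseteq> unit_cube" "finite Y''" using y'Q Ysub fin by (auto simp: Y''_def)
  ultimately have opt'': "energy Y \<le> energy Y''" using opt by blast
  define g where "g = (\<lambda>x. (dist x y)^2 - 2 * s * inner (x - y) m + s^2 * inner m m)"
  have gint: "g integrable_on V" unfolding g_def
    by (rule cont_int) (auto simp: V_def vor_compact intro!: continuous_intros)
  have gle: "(infdist x Y'')^2 \<le> g x" if "x \<in> V" for x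
  proof -
    have "infdist x Y'' \<le> dist x y'" by (rule infdist_le) (simp add: Y''_def)
    also have "\<dots> \<le> dist x q" unfolding y'_def using cp_dist that VQ by auto
    finally have "(infdist x Y'')^2 \<le> (dist x q)^2" by (intro power_mono) (auto intro: infdist_nonneg)
    also have "(dist x q)^2 = g x"
      unfolding g_def q_def dist_norm power2_norm_eq_inner
      by (simp add: inner_diff_left inner_diff_right inner_add_left inner_add_right inner_commute algebra_simps power2_eq_square)
    finally show ?thesis .
  qed
  have "energy Y'' \<le> energy Y + integral V g - integral V (\<lambda>x. (dist x y)^2)"
    using energy_repl[OF yY, of g y'] gint gle by (simp add: V_def Y''_def)
  also have "integral V g = integral V (\<lambda>x. (dist x y)^2) - 2 * s * inner m m + s^2 * inner m m * Vm"
  proof -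
    have a: "(\<lambda>x. 2 * s * inner (x - y) m) integrable_on V"
      by (rule cont_int) (auto simp: V_def vor_compact intro!: continuous_intros)
    have b: "(\<lambda>x. s^2 * inner m m) integrable_on V"
      by (rule cont_int) (auto simp: V_def vor_compact intro!: continuous_intros)
    have "integral V (\<lambda>x. (dist x y)^2 - 2 * s * inner (x - y) m + s^2 * inner m m)
        = integral V (\<lambda>x. (dist x y)^2 - 2 * s * inner (x - y) m) + integral V (\<lambda>x. s^2 * inner m m)"
      by (rule integral_add[OF integrable_diff[OF int2 a] b])
    also have "integral V (\<lambda>x. (dist x y)^2 - 2 * s * inner (x - y) m)
        = integral V (\<lambda>x. (dist x y)^2) - integral V (\<lambda>x. 2 * s * inner (x - y) m)"
      by (rule integral_diff[OF int2 a])
    also have "integral V (\<lambda>x. 2 * s * inner (x - y) m) = 2 * s * inner m m"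
      using integral_cmul[of V "2 * s" "\<lambda>x. inner (x - y) m"] i3 by simp
    also have "integral V (\<lambda>x. s^2 * inner m m) = s^2 * inner m m * Vm"
      using integral_cmul[of V "s^2 * inner m m" "\<lambda>x. 1::real"] unfolding Vm_def by simp
    finally show ?thesis unfolding g_def .
  qed
  finally have "0 \<le> - 2 * s * inner m m + s^2 * inner m m * Vm" using opt'' by simp
  moreover have "inner m m > 0" using m0 by simp
  ultimately have "inner m m * (2 * s) \<le> inner m m * (s^2 * Vm)"
    by (simp add: algebra_simps)
  then have "2 * s \<le> s^2 * Vm" using \<open>inner m m > 0\<close> by simp
  then have "2 \<le> s * Vm" using s0 by (simp add: power2_eq_square mult.assoc)
  then show False using sV by simp
qed



lemma cube_measure: "measure lebesgue unit_cube = 1"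
proof -
  have ne: "cbox 0 (1::real^3) \<noteq> {}" using mem_box_cart(2)[of "0::real^3" 0 1] by auto
  have "measure lebesgue (cbox 0 (1::real^3)) = measure lborel (cbox 0 (1::real^3))" by simp
  also have "\<dots> = 1" using content_cbox_cart[OF ne] by simp
  finally show ?thesis by (simp add: cube_cbox)
qed

lemma cube_dist: "a \<in> unit_cube \<Longrightarrow> b \<in> unit_cube \<Longrightarrow> dist a b \<le> 3"
proof -
  assume a: "a \<in> unit_cube" and b: "b \<in> unit_cube"
  have "dist a b = norm (a - b)" by (simp add: dist_norm)
  also have "\<dots> \<le> sum (\<lambda>i. \<bar>(a - b)$i\<bar>) UNIV" by (rule norm_le_l1_cart)
  also have "\<dots> \<le> sum (\<lambda>i. 1) (UNIV :: 3 set)"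
  proof (intro sum_mono)
    fix i
    have "0 \<le> a$i" "a$i \<le> 1" "0 \<le> b$i" "b$i \<le> 1" using a b by (auto simp: unit_cube_def)
    then show "\<bar>(a - b)$i\<bar> \<le> 1" by simp
  qed
  also have "\<dots> = 3" by simp
  finally show ?thesis .
qed

lemma vor_sub_cube: "voronoi_cell Y y \<subseteq> unit_cube" by (auto simp: voronoi_cell_def)

lemma y_in_vor: "y \<in> unit_cube \<Longrightarrow> y \<in> voronoi_cell Y y" by (auto simp: voronoi_cell_def)

lemma frontier_max:
  assumes yQ: "y \<in> unit_cube"
  shows "\<exists>p\<in>frontier (voronoi_cell Y y). (SUP z'\<in>frontier (voronoi_cell Y y). dist z' y) = dist p y
           \<and> (\<forall>x\<in>voronoi_cell Y y. dist x y \<le> dist p y)"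
proof -
  define V where "V = voronoi_cell Y y"
  have yV: "y \<in> V" using yQ by (simp add: V_def y_in_vor)
  have cV: "compact V" by (simp add: V_def vor_compact)
  have VQ: "V \<subseteq> unit_cube" by (simp add: V_def vor_sub_cube)
  have "(\<chi> i. 2) \<notin> unit_cube" by (auto simp: unit_cube_def)
  then have "V \<noteq> UNIV" using VQ by auto
  then have Fne: "frontier V \<noteq> {}" using yV frontier_eq_empty[of V] by auto
  have FV: "frontier V \<subseteq> V" using cV by (simp add: compact_imp_closed frontier_subset_closed)
  obtain p where p: "p \<in> frontier V" "\<forall>z\<in>frontier V. dist z y \<le> dist p y"
  proof -
    have "continuous_on (frontier V) (\<lambda>z. dist z y)" by (intro continuous_intros)
    then show ?thesis using continuous_attains_sup[OF compact_frontier[OF cV] Fne, of "\<lambda>z. dist z y"] that by blast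
  qed
  have sup: "(SUP z'\<in>frontier V. dist z' y) = dist p y"
    using p by (intro cSup_eq_maximum) auto
  have "dist x y \<le> dist p y" if xV: "x \<in> V" for x
  proof (cases "x = y")
    case True then show ?thesis by simp
  next
    case False
    then have nxy: "norm (x - y) > 0" by simp
    define S where "S = (\<lambda>t. y + t *\<^sub>R (x - y)) ` {1..}"
    have cS: "connected S" unfolding S_def
      by (intro connected_continuous_image connected_Ici continuous_intros)
    have "x \<in> S \<inter> V" using xV unfolding S_def by (auto intro!: image_eqI[of _ _ 1])
    then have i1: "S \<inter> V \<noteq> {}" by auto
    define t where "t = 1 + 4 / norm (x - y)"
    have t1: "t \<ge> 1" using nxy by (simp add: t_def)
    have "dist (y + t *\<^sub>R (x - y)) y = t * norm (x - y)" using t1 by (simp add: dist_norm)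
    also have "\<dots> = norm (x - y) + 4" using nxy by (simp add: t_def field_simps)
    finally have "dist (y + t *\<^sub>R (x - y)) y > 3" using norm_ge_zero[of "x - y"] by linarith
    then have "y + t *\<^sub>R (x - y) \<notin> V" using cube_dist[OF _ yQ] VQ by force
    moreover have "y + t *\<^sub>R (x - y) \<in> S" using t1 unfolding S_def by auto
    ultimately have i2: "S - V \<noteq> {}" by auto
    obtain w where w: "w \<in> S" "w \<in> frontier V" using connected_Int_frontier[OF cS i1 i2] by auto
    then obtain t' where t': "t' \<ge> 1" "w = y + t' *\<^sub>R (x - y)" unfolding S_def by auto
    have "dist x y = norm (x - y)" by (simp add: dist_norm)
    also have "\<dots> \<le> t' * norm (x - y)" using t' mult_right_mono[of 1 t' "norm (x - y)"] by simp
    also have "\<dots> = dist w y" using t' by (simp add: dist_norm)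
    also have "\<dots> \<le> dist p y" using p w by auto
    finally show ?thesis .
  qed
  then show ?thesis using p sup unfolding V_def by blast
qed



lemma cube_root: "(R::real) \<ge> 0 \<Longrightarrow> (R^3) powr (1/3) = R"
proof (cases "R = 0")
  case False
  assume "R \<ge> 0"
  then have "R > 0" using False by simp
  then have "R^3 = R powr 3" by (simp add: powr_realpow)
  then have "(R^3) powr (1/3) = (R powr 3) powr (1/3)" by simp
  also have "\<dots> = R powr 1" by (simp add: powr_powr)
  finally show ?thesis using \<open>R > 0\<close> by simp
qed simp

lemma part2_num:
  fixes R mV c :: real
  assumes R: "R \<ge> 0" and m0: "mV \<ge> 0" and mle: "mV \<le> 4/3*pi*R^3"
    and c: "c = sqrt (1 + (2^4 * 3^3) / (5^2 * 10^3)) - 1" and c0: "c \<ge> 0"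
  shows "Gamma2 * mV powr (1/3) \<le> R * c"
proof -
  define w where "w = 4 * pi / 3"
  have w0: "w > 0" by (simp add: w_def)
  have "mV powr (1/3) \<le> (w * R^3) powr (1/3)"
    using m0 mle by (intro powr_mono2) (auto simp: w_def)
  also have "\<dots> = w powr (1/3) * R" using w0 R by (simp add: powr_mult cube_root)
  finally have a: "mV powr (1/3) \<le> w powr (1/3) * R" .
  have "Gamma2 = c * w powr (-1/3)" by (simp add: Gamma2_def c w_def)
  moreover have "Gamma2 \<ge> 0" using c0 by (simp add: Gamma2_def c[symmetric])
  ultimately have "Gamma2 * mV powr (1/3) \<le> c * w powr (-1/3) * (w powr (1/3) * R)"
    using mult_left_mono[OF a, of Gamma2] by simp
  also have "\<dots> = c * R * (w powr (-1/3) * w powr (1/3))" by simp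
  also have "w powr (-1/3) * w powr (1/3) = 1" using w0 by (simp add: powr_add[symmetric])
  finally show ?thesis by (simp add: mult.commute)
qed

lemma vol_bound:
  assumes "V \<subseteq> cball (y::real^3) R" "V \<in> lmeasurable" "R \<ge> 0"
  shows "measure lebesgue V \<le> 4/3*pi*R^3"
proof -
  have "measure lebesgue V \<le> measure lebesgue (cball y R)"
    using assms by (intro measure_mono_fmeasurable) auto
  also have "\<dots> = measure lborel (cball y R)"
    by (intro measure_completion) auto
  also have "\<dots> = 4/3*pi*R^3" using content_cball[where c=y and r=R] unit_ball_vol_3 assms(3) by simp
  finally show ?thesis .
qed



lemma V_pos:
  assumes yQ: "y \<in> unit_cube" and d: "\<delta> > 0" "\<delta> \<le> 3" and dw: "\<And>w. w \<in> Y - {y} \<Longrightarrow> \<delta> \<le> dist y w"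
  shows "measure lebesgue (voronoi_cell Y y) > 0"
proof -
  define s0 where "s0 = \<delta> / 8"
  have s0: "s0 > 0" "s0 \<le> 1" using d by (auto simp: s0_def)
  define H where "H = (\<lambda>x. y + s0 *\<^sub>R (x - y)) ` unit_cube"
  have HV: "H \<subseteq> voronoi_cell Y y"
  proof
    fix v assume "v \<in> H"
    then obtain x where x: "x \<in> unit_cube" "v = y + s0 *\<^sub>R (x - y)" unfolding H_def by auto
    have "v = (1 - s0) *\<^sub>R y + s0 *\<^sub>R x" using x by (simp add: algebra_simps)
    also have "\<dots> \<in> unit_cube" unfolding cube_cbox
      using x yQ s0 by (intro convexD convex_box) (auto simp: cube_cbox)
    finally have vQ: "v \<in> unit_cube" .
    have "dist v y = s0 * dist x y" using x s0 by (simp add: dist_norm)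
    also have "\<dots> \<le> s0 * 3" using cube_dist[OF x(1) yQ] s0 by simp
    finally have dvy: "dist v y \<le> 3 * s0" by simp
    have "dist v y \<le> dist v w" if "w \<in> Y" for w
    proof (cases "w = y")
      case False
      then have "8 * s0 \<le> dist y w" using dw[of w] that by (simp add: s0_def)
      moreover have "dist y w \<le> dist y v + dist v w" by (rule dist_triangle)
      ultimately show ?thesis using dvy s0(1) dist_commute[of y v] by linarith
    qed simp
    then show "v \<in> voronoi_cell Y y" using vQ by (simp add: voronoi_cell_def)
  qed
  have cH: "compact H" unfolding H_def cube_cbox
    by (intro compact_continuous_image continuous_intros compact_cbox)
  have "measure lebesgue H = s0^3 * measure lebesgue unit_cube"
    unfolding H_def using s0 by (intro homothety_measure) simp
  then have mH: "measure lebesgue H = s0^3" by (simp add: cube_measure)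
  have "measure lebesgue H \<le> measure lebesgue (voronoi_cell Y y)"
    using HV lmeasurable_compact[OF cH] lmeasurable_compact[OF vor_compact[of Y y]]
    by (intro measure_mono_fmeasurable) (auto simp: fmeasurable_def)
  moreover have "s0^3 > 0" using s0 by simp
  ultimately show ?thesis using mH by linarith
qed



lemma replace_contra:
  assumes Ysub: "Y \<subseteq> unit_cube" and fin: "finite Y" and cardY: "card Y = n"
    and opt: "\<And>Y'. Y' \<subseteq> unit_cube \<Longrightarrow> finite Y' \<Longrightarrow> card Y' = n \<Longrightarrow> energy Y \<le> energy Y'"
    and yY: "y \<in> Y" and zY: "z \<in> Y" "z \<noteq> y" and dl: "\<delta> = dist y z" "\<delta> > 0"
    and cen: "integral (voronoi_cell Y y) (\<lambda>x. x - y) = 0"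
    and mpos: "measure lebesgue (voronoi_cell Y y) > 0"
    and pV: "p \<in> voronoi_cell Y y" and pmax: "\<And>x. x \<in> voronoi_cell Y y \<Longrightarrow> dist x y \<le> R"
    and R: "R = dist p y" and small: "\<delta> < R / 100"
  shows False
proof -
  define V where "V = voronoi_cell Y y"
  have cV: "compact V" by (simp add: V_def vor_compact)
  have VQ: "V \<subseteq> unit_cube" by (simp add: V_def vor_sub_cube)
  have R0: "R > 0" using small dl(2) by linarith
  define t :: real where "t = 1/8"
  define S where "S = (\<lambda>x. p + t *\<^sub>R (x - p)) ` V"
  have SV: "S \<subseteq> V"
  proof
    fix v assume "v \<in> S"
    then obtain x where x: "x \<in> V" "v = p + t *\<^sub>R (x - p)" unfolding S_def by auto
    have "v = (1 - t) *\<^sub>R p + t *\<^sub>R x" using x by (simp add: algebra_simps)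
    also have "\<dots> \<in> V" using x pV vor_convex[of Y y]
      by (intro convexD) (auto simp: t_def V_def)
    finally show "v \<in> V" .
  qed
  have cS: "compact S" unfolding S_def using cV
    by (intro compact_continuous_image continuous_intros)
  have Sfar: "dist v z \<ge> 3 * R / 4 - \<delta> \<and> dist v p \<le> R / 4" if "v \<in> S" for v
  proof -
    obtain x where x: "x \<in> V" "v = p + t *\<^sub>R (x - p)" using \<open>v \<in> S\<close> unfolding S_def by auto
    have "dist v p = t * dist x p" using x by (simp add: dist_norm t_def)
    also have "\<dots> \<le> t * (dist x y + dist y p)" by (simp add: t_def dist_triangle)
    also have "\<dots> \<le> t * (R + R)" using pmax[of x] x R
      by (intro mult_left_mono) (auto simp: t_def V_def dist_commute)
    finally have a: "dist v p \<le> R / 4" by (simp add: t_def)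
    have "dist p y \<le> dist p v + dist v y" by (rule dist_triangle)
    moreover have "dist v y \<le> dist v z + dist z y" by (rule dist_triangle)
    ultimately have "dist v z \<ge> 3 * R / 4 - \<delta>" using a R dl dist_commute[of p v] dist_commute[of z y] by linarith
    then show ?thesis using a by simp
  qed
  define D where "D = Y - {y}"
  define Y' where "Y' = insert p D"
  have pnD: "p \<notin> D"
  proof
    assume "p \<in> D"
    then have "dist p y \<le> dist p p" using pV by (auto simp: voronoi_cell_def D_def)
    then show False using R R0 by simp
  qed
  have "card Y' = n" unfolding Y'_def D_def using pnD fin yY cardY
    by (simp add: card_insert_if D_def) (metis One_nat_def Suc_pred card_gt_0_iff empty_iff)
  moreover have "Y' \<subseteq> unit_cube" "finite Y'" using pV VQ Ysub fin by (auto simp: Y'_def D_def V_def)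
  ultimately have opt': "energy Y \<le> energy Y'" using opt by blast
  define k where "k = (\<lambda>x. (dist x z)^2 - (dist x p)^2)"
  define g where "g = (\<lambda>x. (dist x z)^2 - (if x \<in> S then k x else 0))"
  have iz: "(\<lambda>x. (dist x z)^2) integrable_on V"
    by (rule cont_int) (auto simp: cV intro!: continuous_intros)
  have iy: "(\<lambda>x. (dist x y)^2) integrable_on V"
    by (rule cont_int) (auto simp: cV intro!: continuous_intros)
  have kS: "k integrable_on S"
    unfolding k_def by (rule cont_int) (auto simp: cS intro!: continuous_intros)
  have SV': "S \<inter> V = S" using SV by auto
  have ik: "(\<lambda>x. if x \<in> S then k x else 0) integrable_on V"
    using kS SV' by (simp add: integrable_restrict_Int)
  have ik2: "integral V (\<lambda>x. if x \<in> S then k x else 0) = integral S k"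
    using SV' by (simp add: Henstock_Kurzweil_Integration.integral_restrict_Int)
  have gint: "g integrable_on V" unfolding g_def by (rule integrable_diff[OF iz ik])
  have gle: "(infdist x Y')^2 \<le> g x" if "x \<in> V" for x
  proof (cases "x \<in> S")
    case True
    have "infdist x Y' \<le> dist x p" by (rule infdist_le) (simp add: Y'_def)
    then have "(infdist x Y')^2 \<le> (dist x p)^2" by (intro power_mono) (auto intro: infdist_nonneg)
    then show ?thesis using True by (simp add: g_def k_def)
  next
    case False
    have "infdist x Y' \<le> dist x z" by (rule infdist_le) (use zY in \<open>simp add: Y'_def D_def\<close>)
    then have "(infdist x Y')^2 \<le> (dist x z)^2" by (intro power_mono) (auto intro: infdist_nonneg)
    then show ?thesis using False by (simp add: g_def k_def)
  qed
  have E1: "energy Y' \<le> energy Y + integral V g - integral V (\<lambda>x. (dist x y)^2)"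
    using energy_repl[OF yY, of g p] gint gle by (simp add: V_def Y'_def D_def)
  have E2: "integral V g = integral V (\<lambda>x. (dist x z)^2) - integral S k"
    unfolding g_def using integral_diff[OF iz ik] ik2 by simp
  define Vm where "Vm = integral V (\<lambda>x. 1::real)"
  have Vm: "Vm = measure lebesgue V" unfolding Vm_def using lmeasure_integral[OF lmeasurable_compact[OF cV]] by simp
  define Sm where "Sm = integral S (\<lambda>x. 1::real)"
  have Sm: "Sm = t^3 * Vm" unfolding Sm_def
    using lmeasure_integral[OF lmeasurable_compact[OF cS]] homothety_measure[of t p V] Vm
    by (simp add: S_def t_def)
  have i1: "(\<lambda>x. 1::real) integrable_on V" using cont_int[of V "\<lambda>x. 1::real"] cV by simp
  have iS1: "(\<lambda>x. 1::real) integrable_on S" using cont_int[of S "\<lambda>x. 1::real"] cS by simp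
  have ilin: "(\<lambda>x. 2 * inner (x - y) (y - z)) integrable_on V"
    by (rule cont_int) (auto simp: cV intro!: continuous_intros)
  have ic: "(\<lambda>x. \<delta>^2) integrable_on V"
    by (rule cont_int) (auto simp: cV intro!: continuous_intros)
  have E3: "integral V (\<lambda>x. (dist x z)^2) = integral V (\<lambda>x. (dist x y)^2) + \<delta>^2 * Vm"
  proof -
    have eq: "(dist x z)^2 = ((dist x y)^2 + 2 * inner (x - y) (y - z)) + \<delta>^2" for x
      unfolding dl dist_norm power2_norm_eq_inner
      by (simp add: inner_diff_left inner_diff_right inner_commute algebra_simps)
    have "integral V (\<lambda>x. (dist x z)^2) = integral V (\<lambda>x. ((dist x y)^2 + 2 * inner (x - y) (y - z)) + \<delta>^2)"
      by (simp only: eq)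
    also have "\<dots> = integral V (\<lambda>x. (dist x y)^2 + 2 * inner (x - y) (y - z)) + integral V (\<lambda>x. \<delta>^2)"
      by (rule integral_add[OF integrable_add[OF iy ilin] ic])
    also have "integral V (\<lambda>x. (dist x y)^2 + 2 * inner (x - y) (y - z))
        = integral V (\<lambda>x. (dist x y)^2) + integral V (\<lambda>x. 2 * inner (x - y) (y - z))"
      by (rule integral_add[OF iy ilin])
    also have "integral V (\<lambda>x. 2 * inner (x - y) (y - z)) = 0"
    proof -
      have ixy: "(\<lambda>x. x - y) integrable_on V"
        by (rule cont_int) (auto simp: cV intro!: continuous_intros)
      have "integral V (\<lambda>x. inner (x - y) (y - z)) = inner (integral V (\<lambda>x. x - y)) (y - z)"
        by (rule integral_component_eq[OF ixy])
      then have "integral V (\<lambda>x. inner (x - y) (y - z)) = 0" using cen by (simp add: V_def)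
      then show ?thesis using integral_cmul[of V 2 "\<lambda>x. inner (x - y) (y - z)"] by simp
    qed
    also have "integral V (\<lambda>x. \<delta>^2) = \<delta>^2 * Vm"
      using integral_cmul[of V "\<delta>^2" "\<lambda>x. 1::real"] unfolding Vm_def by simp
    finally show ?thesis by simp
  qed
  define \<kappa> where "\<kappa> = (3 * R / 4 - \<delta>)^2 - (R / 4)^2"
  have E4: "integral S k \<ge> \<kappa> * Sm"
  proof -
    have "integral S (\<lambda>x. \<kappa>) \<le> integral S k"
    proof (rule integral_le)
      show "(\<lambda>x. \<kappa>) integrable_on S" using cont_int[of S "\<lambda>x. \<kappa>"] cS by simp
      show "k integrable_on S" by (rule kS)
      fix x assume "x \<in> S"
      then have a: "dist x z \<ge> 3 * R / 4 - \<delta>" "dist x p \<le> R / 4" using Sfar by auto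
      have b: "3 * R / 4 - \<delta> \<ge> 0" using small R0 by linarith
      have "(3 * R / 4 - \<delta>)^2 \<le> (dist x z)^2" using a b by (intro power_mono) auto
      moreover have "(dist x p)^2 \<le> (R / 4)^2" using a by (intro power_mono) auto
      ultimately show "\<kappa> \<le> k x" by (simp add: \<kappa>_def k_def)
    qed
    moreover have "integral S (\<lambda>x. \<kappa>) = \<kappa> * Sm"
      using integral_cmul[of S "\<kappa>" "\<lambda>x. 1::real"] unfolding Sm_def by simp
    ultimately show ?thesis by simp
  qed
  have "energy Y \<le> energy Y + \<delta>^2 * Vm - \<kappa> * Sm" using opt' E1 E2 E3 E4 by simp
  then have "\<kappa> * t^3 * Vm \<le> \<delta>^2 * Vm" using Sm by (simp add: algebra_simps)
  moreover have "Vm > 0" using mpos Vm by (simp add: V_def)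
  ultimately have le: "\<kappa> * t^3 \<le> \<delta>^2" by simp
  have d1: "3 * R / 4 - \<delta> \<ge> 74 / 100 * R" using small by linarith
  have f1: "(74 / 100 * R)^2 \<le> (3 * R / 4 - \<delta>)^2" using d1 R0 by (intro power_mono) auto
  have f2: "\<delta>^2 < (R / 100)^2" using small dl by (intro power_strict_mono) auto
  have f3: "R^2 > 0" using R0 by simp
  have le2: "(3 * R / 4 - \<delta>)^2 - (R / 4)^2 \<le> 512 * \<delta>^2" using le unfolding \<kappa>_def t_def by (simp add: power_divide field_simps)
  have e1: "(R / 4)^2 = R^2 / 16" by (simp add: power_divide)
  have e2: "(74 / 100 * R)^2 = 5476 / 10000 * R^2" by (simp add: power2_eq_square)
  have e3: "(R / 100)^2 = R^2 / 10000" by (simp add: power_divide)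
  show False using f1 f2 f3 le2 e1 e2 e3 by linarith
qed



theorem lemma3p2:
  fixes n :: nat and Yn :: "(real^3) set" and y :: "real^3"
  assumes "n \<ge> 2"
    and "Yn \<subseteq> unit_cube" and "finite Yn" and "card Yn = n"
    and "\<And>Y. Y \<subseteq> unit_cube \<Longrightarrow> finite Y \<Longrightarrow> card Y = n \<Longrightarrow> energy Yn \<le> energy Y"
    and "y \<in> Yn"
  shows "Min ((\<lambda>z. dist y z) ` (Yn - {y}))
           \<ge> (SUP z'\<in>frontier (voronoi_cell Yn y). dist z' y)
               * (sqrt (1 + (2^4 * 3^3) / (5^2 * 10^3)) - 1)
       \<and> (SUP z'\<in>frontier (voronoi_cell Yn y). dist z' y)
               * (sqrt (1 + (2^4 * 3^3) / (5^2 * 10^3)) - 1)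
           \<ge> Gamma2 * (measure lebesgue (voronoi_cell Yn y)) powr (1/3)"
proof -
  define V where "V = voronoi_cell Yn y"
  define R where "R = (SUP z'\<in>frontier V. dist z' y)"
  define c :: real where "c = sqrt (1 + (2^4 * 3^3) / (5^2 * 10^3)) - 1"
  have yQ: "y \<in> unit_cube" using assms by auto
  obtain p where p: "p \<in> frontier V" "R = dist p y" "\<forall>x\<in>V. dist x y \<le> dist p y"
    using frontier_max[OF yQ, of Yn] unfolding V_def R_def by blast
  have pV: "p \<in> V" using p(1) vor_closed[of Yn y] frontier_subset_closed unfolding V_def by blast
  have R0: "R \<ge> 0" using p by simp
  have c0: "c > 0"
  proof -
    have "sqrt 1 < sqrt (1 + (2^4 * 3^3) / (5^2 * 10^3) :: real)" by (subst real_sqrt_less_iff) simp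
    then show ?thesis by (simp add: c_def)
  qed
  have c1: "c \<le> 1 / 100"
  proof -
    have "sqrt (1 + (2^4 * 3^3) / (5^2 * 10^3) :: real) \<le> sqrt ((101/100)^2)"
      by (rule real_sqrt_le_mono) (simp add: power2_eq_square)
    also have "\<dots> = 101 / 100" by simp
    finally show ?thesis by (simp add: c_def)
  qed
  have Vsub: "V \<subseteq> cball y R" using p(2,3) by (auto simp: dist_commute)
  have Vlm: "V \<in> lmeasurable" by (simp add: V_def vor_compact lmeasurable_compact)
  have part2: "R * c \<ge> Gamma2 * (measure lebesgue V) powr (1/3)"
    by (rule part2_num[OF R0 _ vol_bound[OF Vsub Vlm R0] c_def]) (use c0 in auto)
  define D where "D = Yn - {y}"
  have Dfin: "finite D" using assms by (simp add: D_def)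
  have Dne: "D \<noteq> {}"
  proof
    assume "D = {}"
    then have "Yn \<subseteq> {y}" by (auto simp: D_def)
    then have "card Yn \<le> 1" using card_mono[of "{y}" Yn] by simp
    then show False using assms by simp
  qed
  define \<delta> where "\<delta> = Min ((\<lambda>z. dist y z) ` D)"
  have "\<delta> \<in> (\<lambda>z. dist y z) ` D" unfolding \<delta>_def using Dfin Dne by (intro Min_in) auto
  then obtain z where z: "z \<in> D" "\<delta> = dist y z" by auto
  have dle: "\<delta> \<le> dist y w" if "w \<in> D" for w
    unfolding \<delta>_def using Dfin that by (intro Min_le) auto
  have zY: "z \<in> Yn" "z \<noteq> y" using z by (auto simp: D_def)
  have d0: "\<delta> > 0" using z zY by simp
  have part1: "\<delta> \<ge> R * c"
  proof (rule ccontr)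
    assume "\<not> \<delta> \<ge> R * c"
    then have lt: "\<delta> < R * c" by simp
    have "R * c \<le> R / 100" using c1 R0 mult_left_mono[OF c1 R0] by simp
    then have small: "\<delta> < R / 100" using lt by simp
    have cen: "integral (voronoi_cell Yn y) (\<lambda>x. x - y) = 0"
      by (rule centroid[OF assms(2,3,4,5,6) d0]) (use dle in \<open>auto simp: D_def\<close>)
    have d3: "\<delta> \<le> 3" using z zY assms(2) cube_dist[OF yQ, of z] by auto
    have mpos: "measure lebesgue (voronoi_cell Yn y) > 0"
      by (rule V_pos[OF yQ d0 d3]) (use dle in \<open>auto simp: D_def\<close>)
    show False
      by (rule replace_contra[OF assms(2,3,4,5,6) zY z(2) d0 cen mpos, of p R])
         (use pV p small in \<open>auto simp: V_def\<close>)
  qed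
  show ?thesis using part1 part2 unfolding V_def R_def c_def \<delta>_def D_def by simp
qed

end
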